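(* Let $n\ge 4$ and let $q$ be a prime power with $q>\frac{n(n-1)^2(n-2)^2}{4}$. Then there exist pairwise distinct $\alpha_1,\dots,\alpha_n\in\mathbb F_q$ such that for every $\mathbf i=(i_1,i_2,i_3),\mathbf j=(j_1,j_2,j_3)\in S_3(n)$ with $d_H(\mathbf i,\mathbf j)\ge2$ there is no pair $(a,b)\in\mathbb F_q^*\times\mathbb F_q$ with $a\alpha_{i_\ell}+b=\alpha_{j_\ell}$ for all $\ell=1,2,3$.
   Context: $S_3(n)=\{(i_1,i_2,i_3)\in\{1,\dots,n\}^3: i_1<i_2<i_3\}$, and $d_H(\mathbf i,\mathbf j)$ is the number of coordinates in which $\mathbf i$ and $\mathbf j$ differ. *)

theory Defs
  imports Main
begin

definition S3 :: "nat \<Rightarrow> (nat \<times> nat \<times> nat) set" where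
  "S3 n = {(i1, i2, i3). 1 \<le> i1 \<and> i1 < i2 \<and> i2 < i3 \<and> i3 \<le> n}"

definition dH :: "nat \<times> nat \<times> nat \<Rightarrow> nat \<times> nat \<times> nat \<Rightarrow> nat" where
  "dH i j = (case i of (i1, i2, i3) \<Rightarrow> case j of (j1, j2, j3) \<Rightarrow>
     (if i1 = j1 then 0 else 1) + (if i2 = j2 then 0 else 1) + (if i3 = j3 then 0 else 1))"

end

theory Submission
  imports Defs
begin

lemma card_T: "2 * card {(a,b). 1 \<le> a \<and> a < b \<and> b \<le> (N::nat)} = N*(N-1)"
proof (induction N)
  case 0
  have e: "{(a,b). 1 \<le> a \<and> a < b \<and> b \<le> (0::nat)} = {}" by auto
  show ?case unfolding e by simp
next
  case (Suc N)
  have eq: "{(a,b). 1 \<le> a \<and> a < b \<and> b \<le> Suc N} =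
    {(a,b). 1 \<le> a \<and> a < b \<and> b \<le> N} \<union> (\<lambda>a. (a, Suc N)) ` {1..N}"
    by (auto simp: le_Suc_eq)
  have fin: "finite {(a,b). 1 \<le> a \<and> a < b \<and> b \<le> (N::nat)}"
    by (rule finite_subset[of _ "{1..N} \<times> {1..N}"]) auto
  have disj: "{(a,b). 1 \<le> a \<and> a < b \<and> b \<le> N} \<inter> (\<lambda>a. (a, Suc N)) ` {1..N} = {}"
    by auto
  have ci: "card ((\<lambda>a. (a, Suc N)) ` {1..N}) = N"
    by (subst card_image) (auto simp: inj_on_def)
  have "card {(a,b). 1 \<le> a \<and> a < b \<and> b \<le> Suc N} = card {(a,b). 1 \<le> a \<and> a < b \<and> b \<le> N} + N"
    unfolding eq by (subst card_Un_disjoint) (use fin disj ci in auto)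
  then show ?case using Suc.IH by (cases N) (auto simp: algebra_simps)
qed

lemma solve1:
  fixes x a c d :: "'a::field"
  assumes "d \<noteq> 0" "(x - a) * d = c"
  shows "x = a + c / d"
  using assms by (auto simp: field_simps)

lemma solve2:
  fixes x a b di dj :: "'a::field"
  assumes "dj - di \<noteq> 0" "(x - a) * dj = (x - b) * di"
  shows "x = (a * dj - b * di) / (dj - di)"
  using assms by (auto simp: field_simps)

lemma degen:
  fixes x a b d :: "'a::field"
  assumes "d \<noteq> 0" "(x - a) * d = (x - b) * d"
  shows "a = b"
  using assms by auto

lemma greedy:
  fixes n c :: nat
  assumes n4: "n \<ge> 4" and q: "card (UNIV::'a::{field,finite} set) > n * c * c"
    and c: "2*c = (n-1)*(n-2)"
  shows "m \<le> n \<Longrightarrow> \<exists>\<alpha>::nat\<Rightarrow>'a. inj_on \<alpha> {1..m} \<and>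
    (\<forall>i1 i2 i3 j1 j2 j3. (i1,i2,i3) \<in> S3 m \<longrightarrow> (j1,j2,j3) \<in> S3 m \<longrightarrow>
       (i1,i2,i3) \<noteq> (j1,j2,j3) \<longrightarrow>
       (\<alpha> i3 - \<alpha> i1) * (\<alpha> j2 - \<alpha> j1) \<noteq> (\<alpha> j3 - \<alpha> j1) * (\<alpha> i2 - \<alpha> i1))"
proof (induction m)
  case 0
  then show ?case by (auto simp: S3_def)
next
  case (Suc m)
  then obtain \<alpha> :: "nat \<Rightarrow> 'a" where inj: "inj_on \<alpha> {1..m}" and good:
    "\<forall>i1 i2 i3 j1 j2 j3. (i1,i2,i3) \<in> S3 m \<longrightarrow> (j1,j2,j3) \<in> S3 m \<longrightarrow>
       (i1,i2,i3) \<noteq> (j1,j2,j3) \<longrightarrow>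
       (\<alpha> i3 - \<alpha> i1) * (\<alpha> j2 - \<alpha> j1) \<noteq> (\<alpha> j3 - \<alpha> j1) * (\<alpha> i2 - \<alpha> i1)"
    by auto
  have mn: "m \<le> n - 1" using Suc.prems by simp
  define T where "T = {(a,b). 1 \<le> a \<and> a < b \<and> b \<le> n-1}"
  have cT: "card T = c"
  proof -
    have a: "2 * card T = (n-1)*(n-1-1)" using card_T[of "n-1"] unfolding T_def by simp
    have "n-1-1 = n-(2::nat)" by arith
    then have "(n-1)*(n-1-1) = 2*c" using c by simp
    with a show ?thesis by simp
  qed
  have finT: "finite T"
    unfolding T_def by (rule finite_subset[of _ "{1..n-1} \<times> {1..n-1}"]) auto
  define F1 where "F1 = (\<lambda>((i1,i2),(j1,j2,j3)). \<alpha> i1 + (\<alpha> j3 - \<alpha> j1)*(\<alpha> i2 - \<alpha> i1)/(\<alpha> j2 - \<alpha> j1))"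
  define F2 where "F2 = (\<lambda>((i1,i2),(j1,j2)). (\<alpha> i1 * (\<alpha> j2 - \<alpha> j1) - \<alpha> j1 * (\<alpha> i2 - \<alpha> i1)) /
      ((\<alpha> j2 - \<alpha> j1) - (\<alpha> i2 - \<alpha> i1)))"
  define Bad where "Bad = \<alpha>`{1..m} \<union> F1`(T \<times> S3 m) \<union> F2`(T \<times> T)"
  have S3sub: "S3 m \<subseteq> (\<lambda>((a,b),k). (a,b,k))`(T\<times>{3..n-1})"
  proof
    fix t assume "t \<in> S3 m"
    then obtain a b k where t: "t = (a,b,k)" "1 \<le> a" "a < b" "b < k" "k \<le> m"
      unfolding S3_def by auto
    then have "((a,b),k) \<in> T\<times>{3..n-1}" using mn unfolding T_def by auto
    then show "t \<in> (\<lambda>((a,b),k). (a,b,k))`(T\<times>{3..n-1})" using t by force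
  qed
  have finS: "finite (S3 m)"
    using S3sub finT by (meson finite_SigmaI finite_atLeastAtMost finite_imageI finite_subset)
  have cS: "card (S3 m) \<le> c*(n-3)"
  proof -
    have "card (S3 m) \<le> card ((\<lambda>((a,b),k). (a,b,k))`(T\<times>{3..n-1}))"
      using S3sub finT by (intro card_mono) auto
    also have "\<dots> \<le> card (T\<times>{3..n-1})" by (rule card_image_le) (use finT in auto)
    also have "\<dots> = c*(n-3)" using cT n4 by (simp add: card_cartesian_product)
    finally show ?thesis .
  qed
  have cB: "card Bad \<le> m + c*(c*(n-3)) + c*c"
  proof -
    have "card Bad \<le> card (\<alpha>`{1..m}) + card (F1`(T \<times> S3 m)) + card (F2`(T \<times> T))"
      unfolding Bad_def by (meson add_mono card_Un_le le_trans order_refl)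
    also have "\<dots> \<le> m + card (T \<times> S3 m) + card (T\<times>T)"
    proof (intro add_mono)
      show "card (\<alpha>`{1..m}) \<le> m" using card_image_le[of "{1..m}" \<alpha>] by simp
      show "card (F1`(T \<times> S3 m)) \<le> card (T \<times> S3 m)" by (rule card_image_le) (use finT finS in simp)
      show "card (F2`(T \<times> T)) \<le> card (T \<times> T)" by (rule card_image_le) (use finT in simp)
    qed
    also have "\<dots> \<le> m + c*(c*(n-3)) + c*c"
      using cT cS by (simp add: card_cartesian_product)
    finally show ?thesis .
  qed
  have "(n-1)*(n-2) \<ge> 3*2" using n4 by (intro mult_le_mono) auto
  then have c1: "c \<ge> 1" using c by linarith
  have "c*c \<ge> c" using c1 by simp
  have "(n-1)*(n-2) \<ge> (n-1)*2" using n4 by (intro mult_le_mono2) simp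
  then have mlt: "m < 2*(c*c)" using \<open>c*c \<ge> c\<close> c mn n4 by linarith
  have "m + c*(c*(n-3)) + c*c < 2*(c*c) + (c*c)*(n-3) + c*c" using mlt by (simp add: algebra_simps)
  also have "\<dots> = (c*c)*(3 + (n-3))" by (simp add: algebra_simps)
  also have "\<dots> = n*c*c" using n4 by simp
  finally have "card Bad < card (UNIV::'a set)" using cB q by linarith
  then obtain x where xB: "x \<notin> Bad"
    by (metis UNIV_I card_mono finite not_le subsetI)
  define \<beta> where "\<beta> = \<alpha>(Suc m := x)"
  have \<beta>le: "\<And>k. k \<le> m \<Longrightarrow> \<beta> k = \<alpha> k" unfolding \<beta>_def by simp
  have \<beta>m: "\<beta> (Suc m) = x" unfolding \<beta>_def by simp
  have injb: "inj_on \<beta> {1..Suc m}"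
  proof -
    have e: "{1..Suc m} = insert (Suc m) {1..m}" by auto
    have i1: "\<beta>`{1..m} = \<alpha>`{1..m}" by (rule image_cong) (auto simp: \<beta>le)
    have i2: "inj_on \<beta> {1..m}" using inj by (rule inj_on_cong[THEN iffD1, rotated]) (auto simp: \<beta>le)
    have i3: "x \<notin> \<alpha>`{1..m}" using xB unfolding Bad_def by blast
    have "\<beta> (Suc m) \<notin> \<beta>`({1..m} - {Suc m})" using i1 i3 \<beta>m by simp
    then show ?thesis unfolding e inj_on_insert using i2 by blast
  qed
  have injD: "\<And>u v. u \<in> {1..m} \<Longrightarrow> v \<in> {1..m} \<Longrightarrow> u \<noteq> v \<Longrightarrow> \<alpha> u \<noteq> \<alpha> v"
    using inj unfolding inj_on_def by blast
  have mixed: "(\<beta> i3 - \<beta> i1) * (\<beta> j2 - \<beta> j1) \<noteq> (\<beta> j3 - \<beta> j1) * (\<beta> i2 - \<beta> i1)"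
    if "(i1,i2,i3) \<in> S3 (Suc m)" "(j1,j2,j3) \<in> S3 m" "i3 = Suc m" for i1 i2 i3 j1 j2 j3
  proof
    assume eq: "(\<beta> i3 - \<beta> i1) * (\<beta> j2 - \<beta> j1) = (\<beta> j3 - \<beta> j1) * (\<beta> i2 - \<beta> i1)"
    have r: "1 \<le> i1" "i1 < i2" "i2 < i3" "1 \<le> j1" "j1 < j2" "j2 < j3" "j3 \<le> m"
      using that unfolding S3_def by auto
    have eq2: "(x - \<alpha> i1) * (\<alpha> j2 - \<alpha> j1) = (\<alpha> j3 - \<alpha> j1) * (\<alpha> i2 - \<alpha> i1)"
      using eq r that(3) \<beta>le \<beta>m by simp
    have "\<alpha> j2 - \<alpha> j1 \<noteq> 0" using injD[of j2 j1] r by auto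
    then have "x = F1((i1,i2),(j1,j2,j3))" using solve1[OF _ eq2] unfolding F1_def by simp
    moreover have "((i1,i2),(j1,j2,j3)) \<in> T \<times> S3 m" using r that mn unfolding T_def by auto
    ultimately show False using xB unfolding Bad_def by auto
  qed
  have both: "(\<beta> i3 - \<beta> i1) * (\<beta> j2 - \<beta> j1) \<noteq> (\<beta> j3 - \<beta> j1) * (\<beta> i2 - \<beta> i1)"
    if "(i1,i2,i3) \<in> S3 (Suc m)" "(j1,j2,j3) \<in> S3 (Suc m)" "i3 = Suc m" "j3 = Suc m"
       "(i1,i2,i3) \<noteq> (j1,j2,j3)" for i1 i2 i3 j1 j2 j3
  proof
    assume eq: "(\<beta> i3 - \<beta> i1) * (\<beta> j2 - \<beta> j1) = (\<beta> j3 - \<beta> j1) * (\<beta> i2 - \<beta> i1)"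
    have r: "1 \<le> i1" "i1 < i2" "i2 \<le> m" "1 \<le> j1" "j1 < j2" "j2 \<le> m"
      using that unfolding S3_def by auto
    have eq2: "(x - \<alpha> i1) * (\<alpha> j2 - \<alpha> j1) = (x - \<alpha> j1) * (\<alpha> i2 - \<alpha> i1)"
      using eq r that(3,4) \<beta>le \<beta>m by (simp add: mult.commute)
    have dj: "\<alpha> j2 - \<alpha> j1 \<noteq> 0" using injD[of j2 j1] r by auto
    show False
    proof (cases "(\<alpha> j2 - \<alpha> j1) - (\<alpha> i2 - \<alpha> i1) = 0")
      case True
      then have "\<alpha> i2 - \<alpha> i1 = \<alpha> j2 - \<alpha> j1" by simp
      then have "\<alpha> i1 = \<alpha> j1" using degen[OF dj] eq2 by metis
      then have "i1 = j1" using injD[of i1 j1] r by force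
      with \<open>\<alpha> i2 - \<alpha> i1 = \<alpha> j2 - \<alpha> j1\<close> have "\<alpha> i2 = \<alpha> j2" by simp
      then have "i2 = j2" using injD[of i2 j2] r by force
      then show False using \<open>i1 = j1\<close> that by auto
    next
      case False
      then have "x = F2((i1,i2),(j1,j2))" using solve2[OF False eq2] unfolding F2_def by simp
      moreover have "((i1,i2),(j1,j2)) \<in> T \<times> T" using r mn unfolding T_def by auto
      ultimately show False using xB unfolding Bad_def by auto
    qed
  qed
  show ?case
  proof (intro exI conjI allI impI)
    show "inj_on \<beta> {1..Suc m}" by (rule injb)
  next
    fix i1 i2 i3 j1 j2 j3
    assume i: "(i1,i2,i3) \<in> S3 (Suc m)" and j: "(j1,j2,j3) \<in> S3 (Suc m)"
      and ne: "(i1,i2,i3) \<noteq> (j1,j2,j3)"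
    have ri: "i3 \<le> Suc m" "j3 \<le> Suc m" using i j unfolding S3_def by auto
    show "(\<beta> i3 - \<beta> i1) * (\<beta> j2 - \<beta> j1) \<noteq> (\<beta> j3 - \<beta> j1) * (\<beta> i2 - \<beta> i1)"
    proof (cases "i3 = Suc m")
      case ti: True
      show ?thesis
      proof (cases "j3 = Suc m")
        case True
        show ?thesis by (rule both[OF i j ti True ne])
      next
        case False
        then have "(j1,j2,j3) \<in> S3 m" using j ri unfolding S3_def by auto
        then show ?thesis using mixed[OF i _ ti] by blast
      qed
    next
      case fi: False
      then have im: "(i1,i2,i3) \<in> S3 m" using i ri unfolding S3_def by auto
      show ?thesis
      proof (cases "j3 = Suc m")
        case True
        have "(\<beta> j3 - \<beta> j1) * (\<beta> i2 - \<beta> i1) \<noteq> (\<beta> i3 - \<beta> i1) * (\<beta> j2 - \<beta> j1)"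
          using mixed[OF j im True] .
        then show ?thesis by metis
      next
        case False
        then have jm: "(j1,j2,j3) \<in> S3 m" using j ri unfolding S3_def by auto
        have "i1 \<le> m" "i2 \<le> m" "i3 \<le> m" "j1 \<le> m" "j2 \<le> m" "j3 \<le> m"
          using im jm unfolding S3_def by auto
        then show ?thesis using good im jm ne \<beta>le by auto
      qed
    qed
  qed
qed

theorem lemma4p7:
  fixes n :: nat
  assumes "n \<ge> 4"
    and "4 * card (UNIV :: 'a::{field, finite} set) > n * (n - 1)^2 * (n - 2)^2"
  shows "\<exists>\<alpha> :: nat \<Rightarrow> 'a. inj_on \<alpha> {1..n} \<and>
    (\<forall>i1 i2 i3 j1 j2 j3. (i1, i2, i3) \<in> S3 n \<longrightarrow> (j1, j2, j3) \<in> S3 n \<longrightarrow>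
       dH (i1, i2, i3) (j1, j2, j3) \<ge> 2 \<longrightarrow>
       \<not> (\<exists>a b. a \<noteq> 0 \<and> a * \<alpha> i1 + b = \<alpha> j1 \<and> a * \<alpha> i2 + b = \<alpha> j2
                  \<and> a * \<alpha> i3 + b = \<alpha> j3))"
proof -
  define c where "c = (n-1)*(n-2) div 2"
  have c: "2*c = (n-1)*(n-2)" unfolding c_def by simp
  have "n * (n - 1)^2 * (n - 2)^2 = n * ((n-1)*(n-2))^2" by (simp add: power_mult_distrib)
  also have "\<dots> = n * (2*c)^2" using c by simp
  also have "\<dots> = 4 * (n*c*c)" by (simp add: power2_eq_square)
  finally have "n * (n - 1)^2 * (n - 2)^2 = 4 * (n*c*c)" .
  then have q: "card (UNIV :: 'a set) > n*c*c" using assms(2) by linarith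
  obtain \<alpha> :: "nat \<Rightarrow> 'a" where inj: "inj_on \<alpha> {1..n}" and good:
    "\<forall>i1 i2 i3 j1 j2 j3. (i1,i2,i3) \<in> S3 n \<longrightarrow> (j1,j2,j3) \<in> S3 n \<longrightarrow>
       (i1,i2,i3) \<noteq> (j1,j2,j3) \<longrightarrow>
       (\<alpha> i3 - \<alpha> i1) * (\<alpha> j2 - \<alpha> j1) \<noteq> (\<alpha> j3 - \<alpha> j1) * (\<alpha> i2 - \<alpha> i1)"
    using greedy[OF assms(1) q c, of n] by auto
  show ?thesis
  proof (intro exI conjI allI impI)
    show "inj_on \<alpha> {1..n}" by (rule inj)
  next
    fix i1 i2 i3 j1 j2 j3
    assume i: "(i1,i2,i3) \<in> S3 n" and j: "(j1,j2,j3) \<in> S3 n"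
      and d: "dH (i1, i2, i3) (j1, j2, j3) \<ge> 2"
    have ne: "(i1,i2,i3) \<noteq> (j1,j2,j3)" using d unfolding dH_def by auto
    show "\<not> (\<exists>a b. a \<noteq> 0 \<and> a * \<alpha> i1 + b = \<alpha> j1 \<and> a * \<alpha> i2 + b = \<alpha> j2
                  \<and> a * \<alpha> i3 + b = \<alpha> j3)"
    proof
      assume "\<exists>a b. a \<noteq> 0 \<and> a * \<alpha> i1 + b = \<alpha> j1 \<and> a * \<alpha> i2 + b = \<alpha> j2
                  \<and> a * \<alpha> i3 + b = \<alpha> j3"
      then obtain a b where h: "a * \<alpha> i1 + b = \<alpha> j1" "a * \<alpha> i2 + b = \<alpha> j2" "a * \<alpha> i3 + b = \<alpha> j3"
        by blast
      have "(\<alpha> i3 - \<alpha> i1) * (\<alpha> j2 - \<alpha> j1) = (\<alpha> j3 - \<alpha> j1) * (\<alpha> i2 - \<alpha> i1)"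
        unfolding h[symmetric] by (simp add: algebra_simps)
      then show False using good i j ne by blast
    qed
  qed
qed

end
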